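(* Let $\mathcal{Y}=\{\boldsymbol{x}_1,\dots,\boldsymbol{x}_m\}$ be a finite subset of the unit ball $B_n(1)=\{\boldsymbol{x}\in\mathbb{R}^n:\|\boldsymbol{x}\|\le1\}$ with $\|\boldsymbol{x}_i\|\ge1-\varepsilon$ for all $i$, where $\varepsilon\in(0,1)$. Let $\beta_1,\beta_2\in\mathbb{R}$ satisfy $$\beta_2(m-1)\le\sum_{j\in\{1,\dots,m\},\,j\ne i}\langle\boldsymbol{x}_i,\boldsymbol{x}_j\rangle\le\beta_1(m-1)\quad\text{for all }i=1,\dots,m,$$ and $$(1-\varepsilon)^2+\beta_2(m-1)>0,\qquad 1+(m-1)\beta_1>0.$$ Let $\bar{\boldsymbol{y}}=\frac1m\sum_{i=1}^m\boldsymbol{x}_i$ and $$\ell(\boldsymbol{x})=\Big\langle\frac{\bar{\boldsymbol{y}}}{\|\bar{\boldsymbol{y}}\|},\boldsymbol{x}\Big\rangle-\frac1{\sqrt m}\Big(\frac{(1-\varepsilon)^2+\beta_2(m-1)}{\sqrt{1+(m-1)\beta_1}}\Big).$$ Then $\ell(\boldsymbol{x}_i)\ge0$ for all $\boldsymbol{x}_i\in\mathcal{Y}$.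
   Context: $\langle\cdot,\cdot\rangle$ and $\|\cdot\|$ denote the Euclidean inner product and norm on $\mathbb{R}^n$. *)

theory Defs
  imports "HOL-Analysis.Analysis"
begin

end

theory Submission
  imports Defs
begin

theorem lemma4:
  fixes x :: "nat \<Rightarrow> 'a::euclidean_space"
    and m :: nat and \<epsilon> \<beta>1 \<beta>2 :: real
  assumes distinct: "inj_on x {1..m}"
    and in_ball: "\<forall>i\<in>{1..m}. norm (x i) \<le> 1"
    and eps: "0 < \<epsilon>" "\<epsilon> < 1"
    and near_sphere: "\<forall>i\<in>{1..m}. norm (x i) \<ge> 1 - \<epsilon>"
    and inner_bounds: "\<forall>i\<in>{1..m}.
        \<beta>2 * (real m - 1) \<le> (\<Sum>j\<in>{1..m} - {i}. inner (x i) (x j)) \<and>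
        (\<Sum>j\<in>{1..m} - {i}. inner (x i) (x j)) \<le> \<beta>1 * (real m - 1)"
    and pos2: "(1 - \<epsilon>)\<^sup>2 + \<beta>2 * (real m - 1) > 0"
    and pos1: "1 + (real m - 1) * \<beta>1 > 0"
  shows "\<forall>i\<in>{1..m}.
    (let ybar = (1 / real m) *\<^sub>R (\<Sum>k\<in>{1..m}. x k);
         ell = (\<lambda>z. inner ((1 / norm ybar) *\<^sub>R ybar) z
               - (1 / sqrt (real m)) * (((1 - \<epsilon>)\<^sup>2 + \<beta>2 * (real m - 1))
                                        / sqrt (1 + (real m - 1) * \<beta>1)))
     in ell (x i) \<ge> 0)"
proof
  fix i assume i: "i \<in> {1..m}"
  define S where "S = (\<Sum>k\<in>{1..m}. x k)"
  define A where "A = (1 - \<epsilon>)\<^sup>2 + \<beta>2 * (real m - 1)"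
  define B where "B = 1 + (real m - 1) * \<beta>1"
  have m1: "m \<ge> 1" using i by auto
  have split: "inner (x k) S = (norm (x k))\<^sup>2 + (\<Sum>j\<in>{1..m} - {k}. inner (x k) (x j))"
    if "k \<in> {1..m}" for k
  proof -
    have "inner (x k) S = (\<Sum>j\<in>{1..m}. inner (x k) (x j))"
      unfolding S_def by (simp add: inner_sum_right)
    also have "\<dots> = inner (x k) (x k) + (\<Sum>j\<in>{1..m} - {k}. inner (x k) (x j))"
      using that by (simp add: sum.remove)
    finally show ?thesis by (simp add: power2_norm_eq_inner)
  qed
  have lo: "inner (x i) S \<ge> A"
  proof -
    have "1 - \<epsilon> \<le> norm (x i)" using near_sphere i by auto
    hence "(1 - \<epsilon>)\<^sup>2 \<le> (norm (x i))\<^sup>2" using eps by (intro power_mono) auto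
    thus ?thesis using split[OF i] inner_bounds i unfolding A_def by force
  qed
  have Apos: "A > 0" using pos2 A_def by simp
  have Bpos: "B > 0" using pos1 B_def by simp
  have up: "inner (x k) S \<le> B" if "k \<in> {1..m}" for k
  proof -
    have "norm (x k) \<le> 1" using in_ball that by auto
    hence "(norm (x k))\<^sup>2 \<le> 1" by (simp add: power_le_one)
    thus ?thesis using split[OF that] inner_bounds that unfolding B_def by (force simp: mult.commute)
  qed
  have "(norm S)\<^sup>2 = inner S S" by (simp add: power2_norm_eq_inner)
  also have "\<dots> = (\<Sum>k\<in>{1..m}. inner (x k) S)" by (simp add: S_def inner_sum_left)
  also have "\<dots> \<le> (\<Sum>k\<in>{1..m}. B)" using up by (intro sum_mono) auto
  also have "\<dots> = real m * B" by simp
  finally have nS: "(norm S)\<^sup>2 \<le> real m * B" .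
  have Spos: "norm S > 0"
  proof (rule ccontr)
    assume "\<not> norm S > 0" hence "S = 0" by simp
    thus False using lo Apos by simp
  qed
  have nS2: "norm S \<le> sqrt (real m) * sqrt B"
    using nS Spos by (metis real_sqrt_abs real_sqrt_le_mono real_sqrt_mult abs_of_pos)
  have mpos: "real m > 0" using m1 by simp
  have ybar: "(1 / norm ((1 / real m) *\<^sub>R S)) *\<^sub>R ((1 / real m) *\<^sub>R S) = (1 / norm S) *\<^sub>R S"
    using mpos by simp
  have "A / (sqrt (real m) * sqrt B) \<le> A / norm S"
    using nS2 Spos Apos mpos Bpos by (intro divide_left_mono) auto
  also have "\<dots> \<le> inner (x i) S / norm S" using lo Spos by (intro divide_right_mono) auto
  finally have key: "A / (sqrt (real m) * sqrt B) \<le> inner ((1 / norm S) *\<^sub>R S) (x i)"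
    by (simp add: inner_commute)
  show "let ybar = (1 / real m) *\<^sub>R (\<Sum>k\<in>{1..m}. x k);
         ell = (\<lambda>z. inner ((1 / norm ybar) *\<^sub>R ybar) z
               - (1 / sqrt (real m)) * (((1 - \<epsilon>)\<^sup>2 + \<beta>2 * (real m - 1))
                                        / sqrt (1 + (real m - 1) * \<beta>1)))
     in ell (x i) \<ge> 0"
    unfolding Let_def S_def[symmetric] ybar using key unfolding A_def B_def by simp
qed

end
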